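(* There is a constant $C$ such that every $(g,a)\in\Gamma_1$ satisfies $\|a_1\|\le C$. Moreover, if $(g,a)\in\Gamma_2$, then $a_1=0$.
   Context: $E(n)$ is the Euclidean group, with elements $(g,a)$ acting by $(g,a)x=gx+a$. $\Gamma\subset E(n)$ is a discrete, fixed-point-free subgroup. $\Gamma^*$ is the intersection of $\Gamma$ with the identity component of the closure of $\Gamma\cdot\mathbb R^n$. By a theorem of Wolf, $\Gamma^*$ is normal of finite index in $\Gamma$. There exist a subspace $V\subset\mathbb R^n$ and a toral subgroup $T\subset O(n)$ such that $T$ acts trivially on $V$, $\Gamma^*\subset T\cdot V$, and $\Gamma^*$ is isomorphic to a discrete uniform subgroup of $V$. Let $\mathbb R^n=V_\perp\oplus V$ orthogonally. Define \[ \Gamma_1=\{(g,a)\in\Gamma: g|_{V_\perp}=I_{V_\perp}\},\qquad \Gamma^{**}=\Gamma^*\cap\Gamma_1 . \] The elements of $\Gamma^{**}$ are pure translations by vectors in $V$. Let $V_2\subset V$ be the linear span of these translation vectors, and let $V_1$ be the orthogonal complement of $V_2$ in $V$, so that $\mathbb R^n=V_\perp\oplus V_1\oplus V_2$. Define \[ \Gamma_2=\{(g,a)\in\Gamma_1: g|_{V_1}=I_{V_1}\}. \] For $a\in\mathbb R^n$ write $a=a_\perp+a_1+a_2$ according to this decomposition. *)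

theory Defs
  imports "HOL-Analysis.Analysis"
begin

text \<open>Elements of the Euclidean group E(n) are pairs (g,a) of an n x n matrix g
  and a vector a, acting by (g,a)x = gx + a.  The ambient space of pairs carries the
  product (Euclidean) topology.\<close>

type_synonym 'n euc = "(real^'n^'n) \<times> (real^'n)"

definition euc_mult :: "'n::finite euc \<Rightarrow> 'n euc \<Rightarrow> 'n euc" where
  "euc_mult p q = (fst p ** fst q, fst p *v snd q + snd p)"

definition euc_one :: "'n::finite euc" where
  "euc_one = (mat 1, 0)"

definition euc_inv :: "'n::finite euc \<Rightarrow> 'n euc" where
  "euc_inv p = (transpose (fst p), - (transpose (fst p) *v snd p))"

definition euc_act :: "'n::finite euc \<Rightarrow> real^'n \<Rightarrow> real^'n" where
  "euc_act p x = fst p *v x + snd p"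

definition Euclidean_group :: "'n::finite euc set" where
  "Euclidean_group = {p. orthogonal_matrix (fst p)}"

definition euc_subgroup :: "'n::finite euc set \<Rightarrow> bool" where
  "euc_subgroup G \<longleftrightarrow> G \<subseteq> Euclidean_group \<and> euc_one \<in> G \<and>
     (\<forall>p\<in>G. \<forall>q\<in>G. euc_mult p q \<in> G) \<and> (\<forall>p\<in>G. euc_inv p \<in> G)"

definition discrete_set :: "'a::metric_space set \<Rightarrow> bool" where
  "discrete_set S \<longleftrightarrow> (\<forall>x\<in>S. \<exists>e>0. \<forall>y\<in>S. dist y x < e \<longrightarrow> y = x)"

definition fixed_point_free :: "'n::finite euc set \<Rightarrow> bool" where
  "fixed_point_free G \<longleftrightarrow> (\<forall>p\<in>G. p \<noteq> euc_one \<longrightarrow> (\<forall>x. euc_act p x \<noteq> x))"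

definition transl_set :: "'n::finite euc set" where
  "transl_set = {(mat 1, b) | b. True}"

definition Gamma_Rn :: "'n::finite euc set \<Rightarrow> 'n euc set" where
  "Gamma_Rn G = {euc_mult p t | p t. p \<in> G \<and> t \<in> transl_set}"

definition Gamma_star :: "'n::finite euc set \<Rightarrow> 'n euc set" where
  "Gamma_star G = G \<inter> connected_component_set (closure (Gamma_Rn G)) euc_one"

definition toral_subgroup :: "(real^'n^'n::finite) set \<Rightarrow> bool" where
  "toral_subgroup T \<longleftrightarrow> T \<subseteq> {g. orthogonal_matrix g} \<and> mat 1 \<in> T \<and>
     (\<forall>s\<in>T. \<forall>t\<in>T. s ** t \<in> T) \<and> (\<forall>t\<in>T. transpose t \<in> T) \<and>
     compact T \<and> connected T \<and> (\<forall>s\<in>T. \<forall>t\<in>T. s ** t = t ** s)"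

definition TV_set :: "(real^'n^'n::finite) set \<Rightarrow> (real^'n) set \<Rightarrow> 'n euc set" where
  "TV_set T V = {(t, v) | t v. t \<in> T \<and> v \<in> V}"

definition discrete_uniform_subgroup :: "(real^'n::finite) set \<Rightarrow> (real^'n) set \<Rightarrow> bool" where
  "discrete_uniform_subgroup L V \<longleftrightarrow> L \<subseteq> V \<and> 0 \<in> L \<and>
     (\<forall>x\<in>L. \<forall>y\<in>L. x + y \<in> L) \<and> (\<forall>x\<in>L. - x \<in> L) \<and> discrete_set L \<and>
     (\<exists>K. compact K \<and> K \<subseteq> V \<and> V \<subseteq> {k + l | k l. k \<in> K \<and> l \<in> L})"

definition orth_comp :: "(real^'n::finite) set \<Rightarrow> (real^'n) set \<Rightarrow> (real^'n) set" where
  "orth_comp W U = {x \<in> U. \<forall>y\<in>W. inner x y = 0}"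

definition proj :: "(real^'n::finite) set \<Rightarrow> real^'n \<Rightarrow> real^'n" where
  "proj W a = (THE u. u \<in> W \<and> (\<forall>w\<in>W. inner (a - u) w = 0))"

definition Gamma1 :: "'n::finite euc set \<Rightarrow> (real^'n) set \<Rightarrow> 'n euc set" where
  "Gamma1 G V = {p \<in> G. \<forall>x\<in>orth_comp V UNIV. fst p *v x = x}"

definition Gamma_2star :: "'n::finite euc set \<Rightarrow> (real^'n) set \<Rightarrow> 'n euc set" where
  "Gamma_2star G V = Gamma_star G \<inter> Gamma1 G V"

definition V2_of :: "'n::finite euc set \<Rightarrow> (real^'n) set \<Rightarrow> (real^'n) set" where
  "V2_of G V = span {snd p | p. p \<in> Gamma_2star G V}"

definition V1_of :: "'n::finite euc set \<Rightarrow> (real^'n) set \<Rightarrow> (real^'n) set" where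
  "V1_of G V = orth_comp (V2_of G V) V"

definition Gamma2 :: "'n::finite euc set \<Rightarrow> (real^'n) set \<Rightarrow> 'n euc set" where
  "Gamma2 G V = {p \<in> Gamma1 G V. \<forall>x\<in>V1_of G V. fst p *v x = x}"

end

theory Submission imports Defs begin

lemma proj_exists_unique:
  fixes W :: "(real^'n::finite) set" assumes "subspace W"
  shows "\<exists>!u. u \<in> W \<and> (\<forall>w\<in>W. inner (a - u) w = 0)"
proof -
  obtain y z where y: "y \<in> span W" and z: "\<And>w. w \<in> span W \<Longrightarrow> orthogonal z w" and a: "a = y + z"
    using orthogonal_subspace_decomp_exists[of W a] by blast
  have sW: "span W = W" using assms by (simp add: span_eq_iff)
  have ex: "y \<in> W \<and> (\<forall>w\<in>W. inner (a - y) w = 0)"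
    using y z a sW by (auto simp: orthogonal_def)
  show ?thesis
  proof (rule ex1I[of _ y])
    show "y \<in> W \<and> (\<forall>w\<in>W. inner (a - y) w = 0)" by (rule ex)
  next
    fix u assume u: "u \<in> W \<and> (\<forall>w\<in>W. inner (a - u) w = 0)"
    have d: "y - u \<in> W" using u ex assms by (simp add: subspace_diff)
    have "inner (y - u) (y - u) = inner (a - u) (y - u) - inner (a - y) (y - u)"
      by (simp add: inner_diff_left)
    also have "\<dots> = 0" using u ex d by simp
    finally show "u = y" by simp
  qed
qed

lemma proj_char:
  fixes W :: "(real^'n::finite) set" assumes "subspace W"
  shows "proj W a \<in> W \<and> (\<forall>w\<in>W. inner (a - proj W a) w = 0)"
  unfolding proj_def using theI'[OF proj_exists_unique[OF assms, of a]] .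

lemma proj_unique:
  fixes W :: "(real^'n::finite) set" assumes "subspace W" "u \<in> W" "\<forall>w\<in>W. inner (a - u) w = 0"
  shows "proj W a = u"
  using proj_exists_unique[OF assms(1), of a] proj_char[OF assms(1), of a] assms(2,3) by blast

lemma proj_add_perp:
  fixes W :: "(real^'n::finite) set" assumes "subspace W" "\<forall>w\<in>W. inner b w = 0"
  shows "proj W (a + b) = proj W a"
  apply (rule proj_unique[OF assms(1)])
  using proj_char[OF assms(1), of a] assms(2) by (auto simp: inner_diff_left inner_add_left algebra_simps)

lemma subspace_orth_comp:
  assumes "subspace U" shows "subspace (orth_comp W U)"
  using assms unfolding subspace_def orth_comp_def by (auto simp: inner_add_left)

lemma orth_inner:
  assumes "orthogonal_matrix g" shows "inner (g *v x) (g *v y) = inner x (y::real^'n::finite)"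
proof -
  have "inner (g *v x) (g *v y) = inner ((g *v x) v* g) y" by (simp add: dot_lmul_matrix)
  also have "(g *v x) v* g = transpose g *v (g *v x)" by simp
  also have "\<dots> = x" using assms by (simp add: matrix_vector_mul_assoc orthogonal_matrix_def)
  finally show ?thesis .
qed

lemma orth_cancel:
  assumes "orthogonal_matrix g" "g *v x = g *v (y::real^'n::finite)" shows "x = y"
proof -
  have "transpose g *v (g *v x) = transpose g *v (g *v y)" using assms(2) by simp
  thus ?thesis using assms(1) by (simp only: matrix_vector_mul_assoc orthogonal_matrix_def matrix_vector_mul_lid)
qed

lemma euc_assoc: "euc_mult (euc_mult a b) c = euc_mult a (euc_mult b c)"
  by (simp add: euc_mult_def matrix_mul_assoc matrix_vector_mul_assoc matrix_vector_right_distrib add.assoc)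

lemma euc_lid: "euc_mult euc_one a = a"
  by (simp add: euc_mult_def euc_one_def)

lemma euc_rid: "euc_mult a euc_one = a"
  by (simp add: euc_mult_def euc_one_def)

lemma euc_cancel:
  assumes "orthogonal_matrix (fst a)" "euc_mult a x = euc_mult a y" shows "x = y"
proof -
  have m: "fst a ** fst x = fst a ** fst y" and v: "fst a *v snd x = fst a *v snd y"
    using assms(2) by (auto simp: euc_mult_def prod_eq_iff)
  have "fst x = fst y" using orth_cancel[OF assms(1)] m by (simp add: matrix_eq matrix_vector_mul_assoc[symmetric])
  moreover have "snd x = snd y" using orth_cancel[OF assms(1) v] .
  ultimately show ?thesis by (simp add: prod_eq_iff)
qed

lemma mv_neg: "A *v (- x) = - (A *v (x::real^'m::finite))"
  using matrix_vector_mult_diff_distrib[of A 0 x] by simp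

lemma aux_eq: "(Py::real^'n::finite) = real k *\<^sub>R Pa \<Longrightarrow> gy + a - real (Suc k) *\<^sub>R Pa = gy - y + (y - Py) + (a - Pa)"
  by (simp add: algebra_simps)

lemma aux_z: "inner gy w = inner y w \<Longrightarrow> inner (y - Py) w = 0 \<Longrightarrow> inner (a - Pa) w = (0::real) \<Longrightarrow>
   inner (gy - y + (y - Py) + (a - Pa)) w = 0"
  by (simp add: inner_add_left inner_diff_left)

primrec epow :: "'n::finite euc \<Rightarrow> nat \<Rightarrow> 'n euc" where
  "epow p 0 = euc_one"
| "epow p (Suc k) = euc_mult p (epow p k)"

lemma epow_add: "epow p (i + k) = euc_mult (epow p i) (epow p k)"
  by (induction i) (simp_all add: euc_lid euc_assoc)

lemma powP_gen:
  fixes p :: "'n::finite euc"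
  assumes sW: "subspace W" and go: "orthogonal_matrix (fst p)" and gW: "\<forall>w\<in>W. fst p *v w = w"
  shows "proj W (snd (epow p k)) = real k *\<^sub>R proj W (snd p)"
proof (induction k)
  case 0 show ?case
    by (rule proj_unique[OF sW]) (simp_all add: euc_one_def subspace_0[OF sW])
next
  case (Suc k)
  define y where "y = snd (epow p k)"
  have s: "snd (epow p (Suc k)) = fst p *v y + snd p" unfolding y_def by (simp add: euc_mult_def)
  have a1: "proj W (snd p) \<in> W" and a1p: "\<forall>w\<in>W. inner (snd p - proj W (snd p)) w = 0"
    using proj_char[OF sW] by auto
  have y: "\<forall>w\<in>W. inner (y - proj W y) w = 0" using proj_char[OF sW] by auto
  show ?case unfolding s
  proof (rule proj_unique[OF sW])
    show "real (Suc k) *\<^sub>R proj W (snd p) \<in> W" using a1 sW by (simp add: subspace_mul)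
    show "\<forall>w\<in>W. inner (fst p *v y + snd p - real (Suc k) *\<^sub>R proj W (snd p)) w = 0"
    proof
      fix w assume w: "w \<in> W"
      have gy: "inner (fst p *v y) w = inner y w" using orth_inner[OF go, of y w] gW w by simp
      have eq: "fst p *v y + snd p - real (Suc k) *\<^sub>R proj W (snd p) =
                (fst p *v y) - y + (y - proj W y) + (snd p - proj W (snd p))"
        by (rule aux_eq) (use Suc.IH in \<open>simp add: y_def\<close>)
      have z: "inner ((fst p *v y) - y + (y - proj W y) + (snd p - proj W (snd p))) w = 0"
        by (rule aux_z[OF gy y[rule_format, OF w] a1p[rule_format, OF w]])
      show "inner (fst p *v y + snd p - real (Suc k) *\<^sub>R proj W (snd p)) w = 0"
        unfolding eq by (rule z)
    qed
  qed
qed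

theorem lemma3p3:
  fixes G :: "'n::finite euc set"
    and T :: "(real^'n^'n) set"
    and V :: "(real^'n) set"
  assumes subgrp: "euc_subgroup G"
    and discr: "discrete_set G"
    and fpf: "fixed_point_free G"
    \<comment> \<open>Wolf: \<Gamma>* is normal of finite index in \<Gamma>\<close>
    and normal: "\<forall>p\<in>G. \<forall>q\<in>Gamma_star G. euc_mult (euc_mult p q) (euc_inv p) \<in> Gamma_star G"
    and fin_index: "finite {{euc_mult p q | q. q \<in> Gamma_star G} | p. p \<in> G}"
    \<comment> \<open>Wolf: the subspace V and toral subgroup T\<close>
    and V_sub: "subspace V"
    and T_toral: "toral_subgroup T"
    and T_triv: "\<forall>t\<in>T. \<forall>v\<in>V. t *v v = v"
    and star_TV: "Gamma_star G \<subseteq> TV_set T V"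
    and star_iso: "\<exists>\<phi> L. discrete_uniform_subgroup L V \<and> bij_betw \<phi> (Gamma_star G) L \<and>
                      (\<forall>p\<in>Gamma_star G. \<forall>q\<in>Gamma_star G. \<phi> (euc_mult p q) = \<phi> p + \<phi> q)"
  shows "(\<exists>C. \<forall>p\<in>Gamma1 G V. norm (proj (V1_of G V) (snd p)) \<le> C) \<and>
         (\<forall>p\<in>Gamma2 G V. proj (V1_of G V) (snd p) = 0)"
proof -
  define S where "S = Gamma_star G"
  define V1 where "V1 = V1_of G V"
  define V2 where "V2 = V2_of G V"
  define P where "P = proj V1"
  define Vp where "Vp = orth_comp V (UNIV :: (real^'n) set)"
  define cs where "cs = (\<lambda>p. {euc_mult p q | q. q \<in> S})"
  define F where "F = {cs p | p. p \<in> G}"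
  have finF: "finite F" using fin_index unfolding F_def cs_def S_def .
  have Gone: "euc_one \<in> G" and Gmul: "\<And>p q. p \<in> G \<Longrightarrow> q \<in> G \<Longrightarrow> euc_mult p q \<in> G"
    and Gorth: "\<And>p. p \<in> G \<Longrightarrow> orthogonal_matrix (fst p)"
    using subgrp by (auto simp: euc_subgroup_def Euclidean_group_def)
  have SG: "S \<subseteq> G" unfolding S_def Gamma_star_def by blast
  have oneS: "euc_one \<in> S"
  proof -
    have "euc_one = euc_mult euc_one (mat 1, 0)" by (simp add: euc_one_def euc_mult_def)
    hence "euc_one \<in> Gamma_Rn G" using Gone unfolding Gamma_Rn_def transl_set_def by blast
    hence "euc_one \<in> closure (Gamma_Rn G)" using closure_subset by blast
    thus ?thesis using Gone unfolding S_def Gamma_star_def by (simp add: connected_component_refl)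
  qed
  have self_cs: "p \<in> cs p" for p
  proof -
    have "p = euc_mult p euc_one" by (simp add: euc_rid)
    thus ?thesis using oneS unfolding cs_def by blast
  qed
  have sV2: "subspace V2" unfolding V2_def V2_of_def by (rule subspace_span)
  have sV1: "subspace V1" unfolding V1_def V1_of_def by (rule subspace_orth_comp[OF V_sub])
  have perp: "\<forall>w\<in>V1. inner x w = 0" if "x \<in> V2" for x
    using that unfolding V1_def V1_of_def V2_def orth_comp_def by (auto simp: inner_commute)
  have P0: "P x = 0" if "x \<in> V2" for x
    unfolding P_def by (rule proj_unique[OF sV1]) (use perp[OF that] subspace_0[OF sV1] in auto)
  have inV2: "snd q \<in> V2" if "q \<in> S" "q \<in> Gamma1 G V" for q
  proof -
    have "snd q \<in> {snd p | p. p \<in> Gamma_2star G V}" using that unfolding Gamma_2star_def S_def by blast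
    thus ?thesis unfolding V2_def V2_of_def by (rule span_base)
  qed
  define rep where "rep = (\<lambda>c. SOME r. r \<in> Gamma1 G V \<and> cs r = c)"
  have key: "P (snd p) = P (snd (rep (cs p)))" if p1: "p \<in> Gamma1 G V" for p
  proof -
    have "\<exists>r. r \<in> Gamma1 G V \<and> cs r = cs p" using p1 by blast
    hence r: "rep (cs p) \<in> Gamma1 G V \<and> cs (rep (cs p)) = cs p"
      unfolding rep_def by (rule someI_ex)
    define r where "r = rep (cs p)"
    have r1: "r \<in> Gamma1 G V" and rc: "cs r = cs p" using r unfolding r_def by auto
    have "p \<in> cs r" using rc self_cs by simp
    then obtain q where q: "q \<in> S" and pq: "p = euc_mult r q" unfolding cs_def by blast
    obtain t v where qtv: "q = (t, v)" and tT: "t \<in> T" and vV: "v \<in> V"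
      using q star_TV unfolding S_def TV_set_def by blast
    define g where "g = fst r"
    have rG: "r \<in> G" using r1 unfolding Gamma1_def by simp
    have go: "orthogonal_matrix g" using Gorth[OF rG] g_def by simp
    have fp: "fst p = g ** t" and sp: "snd p = g *v v + snd r"
      using pq qtv unfolding g_def euc_mult_def by auto
    have t1: "t = mat 1"
    proof -
      have "t *v x = x" for x
      proof -
        define y where "y = proj V x"
        have y: "y \<in> V" and z: "\<forall>w\<in>V. inner (x - y) w = 0" using proj_char[OF V_sub, of x] y_def by auto
        have zVp: "x - y \<in> Vp" using z unfolding Vp_def orth_comp_def by simp
        have "g *v (t *v (x - y)) = x - y"
          using p1 zVp unfolding Gamma1_def Vp_def by (simp add: matrix_vector_mul_assoc fp)
        also have "\<dots> = g *v (x - y)" using r1 zVp unfolding Gamma1_def Vp_def g_def by simp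
        finally have "t *v (x - y) = x - y" by (rule orth_cancel[OF go])
        moreover have "t *v y = y" using T_triv tT y by simp
        moreover have "t *v x = t *v (x - y) + t *v y"
          by (simp add: matrix_vector_right_distrib[symmetric])
        ultimately show ?thesis by simp
      qed
      thus ?thesis by (simp add: matrix_eq)
    qed
    have q1: "q \<in> Gamma1 G V" using q SG qtv t1 unfolding Gamma1_def by auto
    define c where "c = euc_mult (euc_mult r q) (euc_inv r)"
    have cS: "c \<in> S" using normal rG q unfolding c_def S_def by blast
    have c_eq: "c = (mat 1, g *v v)"
    proof -
      have gg: "g ** transpose g = mat 1" using go by (simp add: orthogonal_matrix_def)
      have "fst c = (g ** mat 1) ** transpose g" unfolding c_def qtv t1 euc_mult_def euc_inv_def g_def by (simp only: fst_conv snd_conv)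
      hence f: "fst c = mat 1" using gg by (simp only: matrix_mul_rid)
      have "snd c = (g ** mat 1) *v (- (transpose g *v snd r)) + (g *v v + snd r)"
        unfolding c_def qtv t1 euc_mult_def euc_inv_def g_def by (simp only: fst_conv snd_conv)
      also have "\<dots> = - (g *v (transpose g *v snd r)) + (g *v v + snd r)"
        by (simp only: matrix_mul_rid mv_neg)
      also have "\<dots> = - snd r + (g *v v + snd r)"
        by (simp only: matrix_vector_mul_assoc gg matrix_vector_mul_lid)
      also have "\<dots> = g *v v" by (simp add: algebra_simps)
      finally have "snd c = g *v v" .
      thus ?thesis using f by (simp add: prod_eq_iff)
    qed
    have c1: "c \<in> Gamma1 G V" using cS SG c_eq unfolding Gamma1_def by auto
    have "g *v v \<in> V2" using inV2[OF cS c1] c_eq by simp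
    hence "P (snd r + g *v v) = P (snd r)" unfolding P_def by (intro proj_add_perp[OF sV1] perp)
    thus ?thesis using sp r_def by (simp add: add.commute)
  qed
  have part1: "\<exists>C. \<forall>p\<in>Gamma1 G V. norm (P (snd p)) \<le> C"
  proof (intro exI ballI)
    fix p assume p1: "p \<in> Gamma1 G V"
    have "cs p \<in> F" using p1 unfolding F_def Gamma1_def by blast
    hence "norm (P (snd (rep (cs p)))) \<in> (\<lambda>c. norm (P (snd (rep c)))) ` F" by blast
    thus "norm (P (snd p)) \<le> Max ((\<lambda>c. norm (P (snd (rep c)))) ` F)"
      using key[OF p1] finF by (simp add: Max_ge)
  qed
  have part2: "P (snd p) = 0" if p2: "p \<in> Gamma2 G V" for p
  proof -
    have p1: "p \<in> Gamma1 G V" using p2 unfolding Gamma2_def by simp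
    have pG: "p \<in> G" using p1 unfolding Gamma1_def by simp
    define g where "g = fst p"
    have go: "orthogonal_matrix g" using Gorth[OF pG] g_def by simp
    have gV1: "g *v w = w" if "w \<in> V1" for w using p2 that unfolding Gamma2_def V1_def g_def by simp
    have powG: "epow p k \<in> G" for k by (induction k) (simp_all add: Gone Gmul pG)
    have pow1: "epow p k \<in> Gamma1 G V" for k
    proof -
      have px: "fst p *v x = x" if "x \<in> orth_comp V UNIV" for x using p1 that unfolding Gamma1_def by blast
      have "fst (epow p k) *v x = x" if "x \<in> orth_comp V UNIV" for x
      proof (induction k)
        case 0 show ?case by (simp add: euc_one_def)
      next
        case (Suc k)
        have "fst (epow p (Suc k)) *v x = fst p *v (fst (epow p k) *v x)"
          by (simp add: euc_mult_def matrix_vector_mul_assoc)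
        thus ?case using Suc.IH px[OF that] by simp
      qed
      thus ?thesis using powG unfolding Gamma1_def by simp
    qed
    have a1: "P (snd p) \<in> V1" and a1p: "\<forall>w\<in>V1. inner (snd p - P (snd p)) w = 0"
      using proj_char[OF sV1] unfolding P_def by auto
    have gV1': "\<forall>w\<in>V1. fst p *v w = w" using gV1 unfolding g_def by blast
    have powP: "P (snd (epow p k)) = real k *\<^sub>R P (snd p)" for k
      unfolding P_def using go gV1' unfolding g_def by (rule powP_gen[OF sV1])
    have "\<exists>k>0. epow p k \<in> S"
    proof -
      define f where "f = (\<lambda>j. cs (epow p j))"
      have "range f \<subseteq> F"
      proof (rule subsetI)
        fix c assume "c \<in> range f"
        then obtain j where "c = cs (epow p j)" unfolding f_def by blast
        thus "c \<in> F" unfolding F_def using powG[of j] by blast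
      qed
      hence "finite (range f)" by (rule finite_subset[OF _ finF])
      have "\<not> inj f"
      proof
        assume "inj f"
        hence "finite (UNIV :: nat set)" using finite_imageD[of f UNIV] \<open>finite (range f)\<close> by simp
        thus False by simp
      qed
      then obtain i j where ij: "i \<noteq> j" "f i = f j" unfolding inj_def by blast
      have gen: "\<exists>k>0. epow p k \<in> S" if "i < j" "f i = f j" for i j
      proof -
        have "epow p j \<in> cs (epow p j)" by (rule self_cs)
        hence "epow p j \<in> cs (epow p i)" using that(2) unfolding f_def by simp
        then obtain q where q: "q \<in> S" "epow p j = euc_mult (epow p i) q" unfolding cs_def by blast
        have "epow p j = euc_mult (epow p i) (epow p (j - i))"
          using that(1) epow_add[of p i "j - i"] by simp
        hence "q = epow p (j - i)" using q euc_cancel[OF Gorth[OF powG[of i]]] by simp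
        thus ?thesis using q that by (intro exI[of _ "j - i"]) simp
      qed
      show ?thesis
      proof (cases "i < j")
        case True thus ?thesis using gen[of i j] ij by simp
      next
        case False hence "j < i" using ij by simp
        thus ?thesis using gen[of j i] ij by simp
      qed
    qed
    then obtain k where k: "k > 0" "epow p k \<in> S" by blast
    have "P (snd (epow p k)) = 0" using P0 inV2[OF k(2) pow1] by simp
    thus ?thesis using powP[of k] k(1) by simp
  qed
  have A: "\<exists>C. \<forall>p\<in>Gamma1 G V. norm (proj (V1_of G V) (snd p)) \<le> C" using part1 unfolding P_def V1_def .
  have B: "\<forall>p\<in>Gamma2 G V. proj (V1_of G V) (snd p) = 0" using part2 unfolding P_def V1_def by blast
  show ?thesis using A B by (rule conjI)
qed

end
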